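(* Under the hypotheses of the preceding lemma (Assumption B, $V_0\in W^{1,\infty}(\Omega)$, $V_0\ge0$, free-energy-setting confining potentials $V_k$, $u_k$ a free energy solution of $(\mathrm{E}_{V_k})$), there is a constant $C$ independent of $k$ such that for all $T'\in[0,T]$ $$\int_{\mathbb R^d}\big[u_k|\log u_k|+\Xi(u_k)+u_kV_k+u_k(W*u_k)\big](T')\,dx+\int_0^{T'}\!\!\int_{\mathbb R^d}u_k\big|\nabla\big(\log u_k+\xi(u_k)+V_k+W*u_k\big)\big|^2dx\,dt\le C.$$
   Context: $\Omega\subset\mathbb R^d$ bounded connected $C^2$ domain, $T>0$. Assumption B (free energy setting): (i) $u_0\ge0$, $\int u_0=1$, $\mathrm{supp}\,u_0\subseteq\Omega$, and $E_{V_1}[u_0]<\infty$; (ii) $W\in W^{1,\infty}_{loc}(\mathbb R^d)$, symmetric, $W\ge0$; (iii) potentials $V\in W^{1,\infty}_{loc}$, $V\ge0$, $V(x)\ge c|x|^2$ for large $|x|$; (iv) $\phi\in C^1([0,\infty))$ increasing, $\phi(s)=s+\sigma(s)$, $\phi(0)=0$, $\mu s^a\le\sigma'(s)\le\mu^{-1}s^b$ for $s\ge0$, $\mu>0$, $b\ge a>0$. $\xi(s)=\int_1^s\sigma'(r)/r\,dr$, $\Xi(u)=\int_0^u\xi$, $E_V[u]=\int[u\log u+\Xi(u)+uV+\frac12u(W*u)]dx$. A free energy solution of $(\mathrm{E}_V)$ ($\partial_tu=\mathrm{div}[\nabla\phi(u)+u\nabla V+u\nabla(W*u)]$, $u(0)=u_0$)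 is $u\in C([0,T];\mathcal P_2(\mathbb R^d))\cap L^\infty(0,T;L^1)$, $u\ge0$, distributional solution, $u(t)\to u_0$ in $\mathcal P_2$, satisfying $E_V[u(t)]+\int_0^t\int u|\nabla(\log u+\xi(u)+V+W*u)|^2dxd\tau=E_V[u_0]$. $\Omega_k=\{x:\mathrm{dist}(x,\Omega)\le1/k\}$; $V_k=V_0$ on $\Omega$, $V_k=\zeta_k\ge k$ on $\mathbb R^d\setminus\Omega_k$, $V_k=\psi_k\ge0$ on $\Omega_k\setminus\Omega$, $V_k\in W^{1,\infty}_{loc}$, and $V_k(x)\ge c|x|^2$ for $|x|\ge R$ with $c,R$ independent of $k$. *)

theory Defs
  imports "HOL-Analysis.Analysis"
begin

fun Ck :: "nat \<Rightarrow> ('a::euclidean_space \<Rightarrow> real) \<Rightarrow> bool" where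
  "Ck 0 f = continuous_on UNIV f"
| "Ck (Suc n) f = (continuous_on UNIV f \<and> (\<forall>x. f differentiable (at x)) \<and>
       (\<forall>v. Ck n (\<lambda>x. frechet_derivative f (at x) v)))"

definition smooth_fun :: "('a::euclidean_space \<Rightarrow> real) \<Rightarrow> bool" where
  "smooth_fun f \<longleftrightarrow> (\<forall>n. Ck n f)"

definition tsupport :: "('a::euclidean_space \<Rightarrow> real) \<Rightarrow> 'a set" where
  "tsupport f = closure {x. f x \<noteq> 0}"

definition test_fun :: "('a::euclidean_space \<Rightarrow> real) \<Rightarrow> bool" where
  "test_fun f \<longleftrightarrow> smooth_fun f \<and> compact (tsupport f)"

definition grad :: "('a::euclidean_space \<Rightarrow> real) \<Rightarrow> 'a \<Rightarrow> 'a" where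
  "grad f x = (\<Sum>b\<in>Basis. frechet_derivative f (at x) b *\<^sub>R b)"

definition dtime :: "(real \<times> 'a::euclidean_space \<Rightarrow> real) \<Rightarrow> real \<times> 'a \<Rightarrow> real" where
  "dtime f z = frechet_derivative f (at z) (1, 0)"

definition gradx :: "(real \<times> 'a::euclidean_space \<Rightarrow> real) \<Rightarrow> real \<times> 'a \<Rightarrow> 'a" where
  "gradx f z = (\<Sum>b\<in>Basis. frechet_derivative f (at z) (0, b) *\<^sub>R b)"

definition weak_grad_on :: "'a::euclidean_space set \<Rightarrow> ('a \<Rightarrow> real) \<Rightarrow> ('a \<Rightarrow> 'a) \<Rightarrow> bool" where
  "weak_grad_on U f g \<longleftrightarrow>
     (\<forall>K. compact K \<and> K \<subseteq> U \<longrightarrow> set_integrable lebesgue K f \<and> set_integrable lebesgue K g) \<and>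
     (\<forall>\<psi>. test_fun \<psi> \<and> tsupport \<psi> \<subseteq> U \<longrightarrow>
        (\<integral>x. f x *\<^sub>R grad \<psi> x \<partial>lebesgue) = - (\<integral>x. \<psi> x *\<^sub>R g x \<partial>lebesgue))"

definition Linf_loc :: "'a::euclidean_space set \<Rightarrow> ('a \<Rightarrow> 'b::real_normed_vector) \<Rightarrow> bool" where
  "Linf_loc U f \<longleftrightarrow> set_borel_measurable lebesgue U f \<and>
     (\<forall>K. compact K \<and> K \<subseteq> U \<longrightarrow> (\<exists>M. AE x in lebesgue. x \<in> K \<longrightarrow> norm (f x) \<le> M))"

definition Linf_on :: "'a::euclidean_space set \<Rightarrow> ('a \<Rightarrow> 'b::real_normed_vector) \<Rightarrow> bool" where
  "Linf_on U f \<longleftrightarrow> set_borel_measurable lebesgue U f \<and>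
     (\<exists>M. AE x in lebesgue. x \<in> U \<longrightarrow> norm (f x) \<le> M)"

definition W1inf_loc_with :: "('a::euclidean_space \<Rightarrow> real) \<Rightarrow> ('a \<Rightarrow> 'a) \<Rightarrow> bool" where
  "W1inf_loc_with f g \<longleftrightarrow> Linf_loc UNIV f \<and> weak_grad_on UNIV f g \<and> Linf_loc UNIV g"

definition W1inf_on :: "'a::euclidean_space set \<Rightarrow> ('a \<Rightarrow> real) \<Rightarrow> bool" where
  "W1inf_on U f \<longleftrightarrow> (\<exists>g. Linf_on U f \<and> weak_grad_on U f g \<and> Linf_on U g)"

definition C2_domain :: "'a::euclidean_space set \<Rightarrow> bool" where
  "C2_domain \<Omega> \<longleftrightarrow> open \<Omega> \<and> bounded \<Omega> \<and> connected \<Omega> \<and> \<Omega> \<noteq> {} \<and>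
     (\<forall>p\<in>frontier \<Omega>. \<exists>r>0. \<exists>\<rho>. Ck 2 \<rho> \<and> (\<forall>x\<in>ball p r. grad \<rho> x \<noteq> 0) \<and>
         \<Omega> \<inter> ball p r = {x\<in>ball p r. \<rho> x < 0})"

definition esupp :: "('a::euclidean_space \<Rightarrow> real) \<Rightarrow> 'a set" where
  "esupp f = - \<Union>{U. open U \<and> (AE x in lebesgue. x \<in> U \<longrightarrow> f x = 0)}"

text \<open>phi' is the derivative of phi, so sigma' = phi' - 1.\<close>
definition xi :: "(real \<Rightarrow> real) \<Rightarrow> real \<Rightarrow> real" where
  "xi \<phi>' s = interval_lebesgue_integral lborel (ereal 1) (ereal s) (\<lambda>r. (\<phi>' r - 1) / r)"

definition Xi :: "(real \<Rightarrow> real) \<Rightarrow> real \<Rightarrow> real" where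
  "Xi \<phi>' u = interval_lebesgue_integral lborel (ereal 0) (ereal u) (\<lambda>s. xi \<phi>' s)"

definition ent :: "real \<Rightarrow> real" where
  "ent s = (if s > 0 then s * ln s else 0)"

definition ent_abs :: "real \<Rightarrow> real" where
  "ent_abs s = (if s > 0 then s * \<bar>ln s\<bar> else 0)"

definition conv :: "('a::euclidean_space \<Rightarrow> real) \<Rightarrow> ('a \<Rightarrow> real) \<Rightarrow> 'a \<Rightarrow> real" where
  "conv W u x = (\<integral>y. W (x - y) * u y \<partial>lebesgue)"

definition conv_vec :: "('a::euclidean_space \<Rightarrow> 'a) \<Rightarrow> ('a \<Rightarrow> real) \<Rightarrow> 'a \<Rightarrow> 'a" where
  "conv_vec G u x = (\<integral>y. u y *\<^sub>R G (x - y) \<partial>lebesgue)"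

definition energy_density ::
  "(real \<Rightarrow> real) \<Rightarrow> ('a::euclidean_space \<Rightarrow> real) \<Rightarrow> ('a \<Rightarrow> real) \<Rightarrow> ('a \<Rightarrow> real) \<Rightarrow> 'a \<Rightarrow> real" where
  "energy_density \<phi>' V W u x = ent (u x) + Xi \<phi>' (u x) + u x * V x + 1/2 * u x * conv W u x"

text \<open>E_V[u] (finiteness is expressed separately by integrability of the density).\<close>
definition energy ::
  "(real \<Rightarrow> real) \<Rightarrow> ('a::euclidean_space \<Rightarrow> real) \<Rightarrow> ('a \<Rightarrow> real) \<Rightarrow> ('a \<Rightarrow> real) \<Rightarrow> real" where
  "energy \<phi>' V W u = (\<integral>x. energy_density \<phi>' V W u x \<partial>lebesgue)"

text \<open>Dissipation density u |\<nabla>(log u + xi(u) + V + W*u)|^2, written via the flux: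
  u \<nabla>(log u + xi(u) + V + W*u) = \<nabla>phi(u) + u \<nabla>V + u (\<nabla>W * u), where G is the weak
  gradient of phi(u(t)), gV of V and gW of W; convention 0 where u = 0.\<close>
definition dissip ::
  "(real \<Rightarrow> 'a::euclidean_space \<Rightarrow> real) \<Rightarrow> (real \<Rightarrow> 'a \<Rightarrow> 'a) \<Rightarrow> ('a \<Rightarrow> 'a) \<Rightarrow> ('a \<Rightarrow> 'a)
     \<Rightarrow> real \<times> 'a \<Rightarrow> real" where
  "dissip u G gV gW z = (let t = fst z; x = snd z in
     if u t x > 0 then (norm (G t x + u t x *\<^sub>R gV x + u t x *\<^sub>R conv_vec gW (u t) x))\<^sup>2 / u t x
     else 0)"

definition P2_dens :: "('a::euclidean_space \<Rightarrow> real) \<Rightarrow> bool" where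
  "P2_dens f \<longleftrightarrow> (\<forall>x. f x \<ge> 0) \<and> integrable lebesgue f \<and> (\<integral>x. f x \<partial>lebesgue) = 1 \<and>
     integrable lebesgue (\<lambda>x. (norm x)\<^sup>2 * f x)"

definition coupling :: "('a::euclidean_space \<Rightarrow> real) \<Rightarrow> ('a \<Rightarrow> real) \<Rightarrow> ('a \<times> 'a) measure \<Rightarrow> bool" where
  "coupling f g \<pi> \<longleftrightarrow> sets \<pi> = sets (borel :: ('a \<times> 'a) measure) \<and>
     (\<forall>A\<in>sets (borel :: 'a measure).
        emeasure \<pi> (A \<times> UNIV) = (\<integral>\<^sup>+x. indicator A x * ennreal (f x) \<partial>lebesgue)) \<and>
     (\<forall>B\<in>sets (borel :: 'a measure).
        emeasure \<pi> (UNIV \<times> B) = (\<integral>\<^sup>+x. indicator B x * ennreal (g x) \<partial>lebesgue))"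

definition W2sq :: "('a::euclidean_space \<Rightarrow> real) \<Rightarrow> ('a \<Rightarrow> real) \<Rightarrow> ennreal" where
  "W2sq f g = (INF \<pi>\<in>{\<pi>. coupling f g \<pi>}. \<integral>\<^sup>+z. ennreal ((dist (fst z) (snd z))\<^sup>2) \<partial>\<pi>)"

text \<open>u is a free energy solution of
  \<partial>_t u = div[\<nabla>phi(u) + u \<nabla>V + u \<nabla>(W*u)], u(0) = u0 on [0,T];
  G t is the weak gradient of phi(u(t)), gV of V, gW of W.\<close>
definition free_energy_solution ::
  "(real \<Rightarrow> real) \<Rightarrow> (real \<Rightarrow> real) \<Rightarrow> ('a::euclidean_space \<Rightarrow> real) \<Rightarrow> ('a \<Rightarrow> 'a)
   \<Rightarrow> ('a \<Rightarrow> real) \<Rightarrow> ('a \<Rightarrow> 'a) \<Rightarrow> ('a \<Rightarrow> real) \<Rightarrow> real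
   \<Rightarrow> (real \<Rightarrow> 'a \<Rightarrow> real) \<Rightarrow> (real \<Rightarrow> 'a \<Rightarrow> 'a) \<Rightarrow> bool" where
  "free_energy_solution \<phi> \<phi>' W gW V gV u0 T u G \<longleftrightarrow>
     \<comment> \<open>u \<in> C([0,T]; P_2) \<inter> L^\<infinity>(0,T; L^1), u \<ge> 0\<close>
     (\<forall>t\<in>{0..T}. P2_dens (u t)) \<and>
     (\<forall>t\<in>{0..T}. ((\<lambda>s. W2sq (u s) (u t)) \<longlongrightarrow> 0) (at t within {0..T})) \<and>
     set_borel_measurable lebesgue ({0..T} \<times> UNIV) (\<lambda>z. u (fst z) (snd z)) \<and>
     (\<forall>t x. u t x \<ge> 0) \<and>
     \<comment> \<open>u(t) \<rightarrow> u0 in P_2\<close>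
     ((\<lambda>t. W2sq (u t) u0) \<longlongrightarrow> 0) (at_right 0) \<and>
     \<comment> \<open>G(t) = \<nabla>phi(u(t)) for a.e. t\<close>
     set_borel_measurable lebesgue ({0..T} \<times> UNIV) (\<lambda>z. G (fst z) (snd z)) \<and>
     (AE t in lebesgue. t \<in> {0<..<T} \<longrightarrow> weak_grad_on UNIV (\<lambda>x. \<phi> (u t x)) (G t)) \<and>
     \<comment> \<open>distributional solution\<close>
     (\<forall>\<psi>. test_fun \<psi> \<and> tsupport \<psi> \<subseteq> {0<..<T} \<times> UNIV \<longrightarrow>
        (let F = (\<lambda>z. u (fst z) (snd z) * dtime \<psi> z
              - (G (fst z) (snd z) + u (fst z) (snd z) *\<^sub>R gV (snd z)
                 + u (fst z) (snd z) *\<^sub>R conv_vec gW (u (fst z)) (snd z)) \<bullet> gradx \<psi> z)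
         in integrable lebesgue F \<and> (\<integral>z. F z \<partial>lebesgue) = 0)) \<and>
     \<comment> \<open>energy identity\<close>
     integrable lebesgue (energy_density \<phi>' V W u0) \<and>
     (\<forall>t\<in>{0..T}. integrable lebesgue (energy_density \<phi>' V W (u t)) \<and>
        (\<integral>\<^sup>+z. indicator ({0..t} \<times> UNIV) z * ennreal (dissip u G gV gW z) \<partial>lebesgue) < \<infinity> \<and>
        energy \<phi>' V W (u t)
          + enn2real (\<integral>\<^sup>+z. indicator ({0..t} \<times> UNIV) z * ennreal (dissip u G gV gW z) \<partial>lebesgue)
          = energy \<phi>' V W u0)"

end

theory Submission
  imports Defs
begin


lemma powr_int_bound:
  fixes s b \<mu> :: real
  assumes "0 < s" "s < 1" "b > 0" "\<mu> > 0"
  shows "set_integrable lborel {s<..<1} (\<lambda>x. x powr (b-1) / \<mu>)"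
    "(LINT x:{s<..<1}|lborel. x powr (b-1) / \<mu>) \<le> 1 / (\<mu> * b)"
proof -
  have c: "continuous_on {s..1} (\<lambda>x. x powr (b-1) / \<mu>)"
    using assms by (intro continuous_intros) auto
  show si: "set_integrable lborel {s<..<1} (\<lambda>x. x powr (b-1) / \<mu>)"
    by (rule set_integrable_subset[OF borel_integrable_atLeastAtMost'[OF c]]) auto
  have "(interval_lebesgue_integral lborel (ereal s) (ereal 1) (\<lambda>x. x powr (b-1) / \<mu>)) = 1 powr b / (b*\<mu>) - s powr b / (b*\<mu>)"
  proof (rule interval_integral_FTC_finite)
    show "continuous_on {min s 1..max s 1} (\<lambda>x. x powr (b-1) / \<mu>)" using c assms by simp
    fix x assume x: "min s 1 \<le> x" "x \<le> max s 1"
    then have "x > 0" using assms by auto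
    have "((\<lambda>z. z powr b / (b*\<mu>)) has_real_derivative (b * x powr (b-1)) / (b*\<mu>)) (at x)"
      using has_real_derivative_powr[OF \<open>x>0\<close>, of b] by (intro DERIV_cdivide) auto
    then have "((\<lambda>z. z powr b / (b*\<mu>)) has_real_derivative (x powr (b-1) / \<mu>)) (at x)"
      using assms by simp
    then show "((\<lambda>z. z powr b / (b*\<mu>)) has_vector_derivative (x powr (b-1) / \<mu>)) (at x within {min s 1..max s 1})"
      by (simp add: has_real_derivative_iff_has_vector_derivative has_vector_derivative_at_within)
  qed
  moreover have "(interval_lebesgue_integral lborel (ereal s) (ereal 1) (\<lambda>x. x powr (b-1) / \<mu>)) = (LINT x:{s<..<1}|lborel. x powr (b-1) / \<mu>)"
    using assms by (simp add: interval_lebesgue_integral_def)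
  moreover have "s powr b / (b*\<mu>) \<ge> 0" using assms by simp
  moreover have "1 powr b / (b*\<mu>) = 1 / (\<mu> * b)" by (simp add: mult.commute)
  ultimately show "(LINT x:{s<..<1}|lborel. x powr (b-1) / \<mu>) \<le> 1 / (\<mu> * b)"
    by linarith
qed

lemma xi_lb:
  fixes \<phi>' :: "real \<Rightarrow> real" and \<mu> a b s :: real
  assumes phi_C1: "continuous_on {0..} \<phi>'"
    and sb: "\<forall>s\<ge>0. \<mu> * s powr a \<le> \<phi>' s - 1 \<and> \<phi>' s - 1 \<le> s powr b / \<mu>"
    and mu: "\<mu> > 0" and b: "b > 0" and s: "s > 0"
  shows "xi \<phi>' s \<ge> - (1 / (\<mu> * b))"
proof -
  define h where "h = (\<lambda>r. (\<phi>' r - 1) / r)"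
  have hnn: "h r \<ge> 0" if "r > 0" for r
  proof -
    have "\<mu> * r powr a \<ge> 0" using mu by simp
    then show ?thesis using sb that unfolding h_def by (smt (verit) divide_nonneg_pos)
  qed
  have hub: "h r \<le> r powr (b-1) / \<mu>" if "r > 0" for r
  proof -
    have "\<phi>' r - 1 \<le> r powr b / \<mu>" using sb that by auto
    then have "h r \<le> (r powr b / \<mu>) / r" unfolding h_def using that by (metis divide_divide_eq_left divide_right_mono less_eq_real_def mult.commute)
    also have "\<dots> = r powr (b-1) / \<mu>" using that by (simp add: powr_diff)
    finally show ?thesis .
  qed
  show ?thesis
  proof (cases "s \<ge> 1")
    case True
    then have "xi \<phi>' s = (LINT x:{1<..<s}|lborel. h x)"
      unfolding xi_def h_def by (simp add: interval_lebesgue_integral_def)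
    also have "\<dots> \<ge> 0" unfolding set_lebesgue_integral_def
      by (intro integral_nonneg_AE) (auto intro!: AE_I2 hnn split: split_indicator)
    finally show ?thesis using mu b by (smt (verit) divide_pos_pos mult_pos_pos)
  next
    case False
    then have "xi \<phi>' s = - (LINT x:{s<..<1}|lborel. h x)"
      unfolding xi_def h_def by (simp add: interval_lebesgue_integral_def)
    moreover have "(LINT x:{s<..<1}|lborel. h x) \<le> 1 / (\<mu> * b)"
    proof (cases "set_integrable lborel {s<..<1} h")
      case True
      have "(LINT x:{s<..<1}|lborel. h x) \<le> (LINT x:{s<..<1}|lborel. x powr (b-1) / \<mu>)"
        using s by (intro set_integral_mono True powr_int_bound(1)) (use False b mu hub in auto)
      also have "\<dots> \<le> 1 / (\<mu> * b)" using powr_int_bound(2)[of s b \<mu>] False s b mu by auto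
      finally show ?thesis .
    next
      case False
      then have "(LINT x:{s<..<1}|lborel. h x) = 0"
        unfolding set_lebesgue_integral_def set_integrable_def by (simp add: not_integrable_integral_eq)
      then show ?thesis using mu b by simp
    qed
    ultimately show ?thesis by linarith
  qed
qed

lemma Xi_lb:
  fixes \<phi>' :: "real \<Rightarrow> real" and \<mu> a b s :: real
  assumes phi_C1: "continuous_on {0..} \<phi>'"
    and sb: "\<forall>s\<ge>0. \<mu> * s powr a \<le> \<phi>' s - 1 \<and> \<phi>' s - 1 \<le> s powr b / \<mu>"
    and mu: "\<mu> > 0" and b: "b > 0" and s: "s \<ge> 0"
  shows "Xi \<phi>' s \<ge> - (1 / (\<mu> * b)) * s"
proof -
  have eq: "Xi \<phi>' s = (LINT x:{0<..<s}|lborel. xi \<phi>' x)"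
    unfolding Xi_def using s by (simp add: interval_lebesgue_integral_def)
  have ci: "set_integrable lborel {0<..<s} (\<lambda>_. - (1 / (\<mu> * b)))"
    by (rule set_integrable_subset[OF borel_integrable_atLeastAtMost'[of 0 s]]) auto
  have cv: "(LINT x:{0<..<s}|lborel. - (1 / (\<mu> * b))) = - (1 / (\<mu> * b)) * s"
    using s by (subst set_integral_const) auto
  show ?thesis
  proof (cases "set_integrable lborel {0<..<s} (xi \<phi>')")
    case True
    have "(LINT x:{0<..<s}|lborel. - (1 / (\<mu> * b))) \<le> (LINT x:{0<..<s}|lborel. xi \<phi>' x)"
      by (intro set_integral_mono ci True xi_lb[OF phi_C1 sb mu b]) auto
    then show ?thesis using eq cv by simp
  next
    case False
    then have "Xi \<phi>' s = 0" unfolding eq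
      unfolding set_lebesgue_integral_def set_integrable_def by (simp add: not_integrable_integral_eq)
    then show ?thesis using mu b s by simp
  qed
qed

lemma meas_param_int:
  fixes g :: "real \<Rightarrow> real" and c :: real
  assumes g: "g \<in> borel_measurable borel"
  shows "(\<lambda>s. if c \<le> s then (LINT x:{c<..<s}|lborel. g x) else - (LINT x:{s<..<c}|lborel. g x))
     \<in> borel_measurable borel"
proof -
  have m1: "(\<lambda>s. \<integral>x. (if c < x \<and> x < s then g x else 0) \<partial>lborel) \<in> borel_measurable borel"
    by (rule lborel.borel_measurable_lebesgue_integral) (use g in measurable)
  have m2: "(\<lambda>s. \<integral>x. (if s < x \<and> x < c then g x else 0) \<partial>lborel) \<in> borel_measurable borel"
    by (rule lborel.borel_measurable_lebesgue_integral) (use g in measurable)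
  have e: "(\<lambda>s. if c \<le> s then (LINT x:{c<..<s}|lborel. g x) else - (LINT x:{s<..<c}|lborel. g x))
    = (\<lambda>s. if c \<le> s then (\<integral>x. (if c < x \<and> x < s then g x else 0) \<partial>lborel)
           else - (\<integral>x. (if s < x \<and> x < c then g x else 0) \<partial>lborel))"
    unfolding set_lebesgue_integral_def by (intro ext) (auto intro!: Bochner_Integration.integral_cong simp: indicator_def)
  show ?thesis unfolding e using m1 m2 by measurable
qed

lemma Xi_meas:
  fixes \<phi>' :: "real \<Rightarrow> real"
  assumes phi_C1: "continuous_on {0..} \<phi>'"
  shows "(\<lambda>s. if 0 \<le> s then Xi \<phi>' s else 0) \<in> borel_measurable borel"
proof -
  define h where "h = (\<lambda>x. indicator {0<..} x *\<^sub>R ((\<phi>' x - 1) / x))"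
  have hm: "h \<in> borel_measurable borel" unfolding h_def
    by (rule borel_measurable_continuous_on_indicator) (use phi_C1 in \<open>auto intro!: continuous_intros elim: continuous_on_subset\<close>)
  define P where "P = (\<lambda>s. if 1 \<le> s then (LINT x:{1<..<s}|lborel. h x) else - (LINT x:{s<..<1}|lborel. h x))"
  have Pm: "P \<in> borel_measurable borel" unfolding P_def by (rule meas_param_int[OF hm])
  define xi2 where "xi2 = (\<lambda>s. if 0 < s then P s else 0)"
  have xi2m: "xi2 \<in> borel_measurable borel" unfolding xi2_def using Pm by measurable
  have xe: "xi \<phi>' s = xi2 s" if "s > 0" for s
  proof -
    have a: "(LINT x:{1<..<s}|lborel. h x) = (LINT x:{1<..<s}|lborel. (\<phi>' x - 1) / x)"
      unfolding set_lebesgue_integral_def h_def by (intro Bochner_Integration.integral_cong) (auto simp: indicator_def)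
    have b: "(LINT x:{s<..<1}|lborel. h x) = (LINT x:{s<..<1}|lborel. (\<phi>' x - 1) / x)"
      unfolding set_lebesgue_integral_def h_def using that
      by (intro Bochner_Integration.integral_cong) (auto simp: indicator_def)
    show ?thesis unfolding xi2_def P_def xi_def interval_lebesgue_integral_def using that a b by simp
  qed
  define Q where "Q = (\<lambda>s. if 0 \<le> s then (LINT x:{0<..<s}|lborel. xi2 x) else - (LINT x:{s<..<0}|lborel. xi2 x))"
  have Qm: "Q \<in> borel_measurable borel" unfolding Q_def by (rule meas_param_int[OF xi2m])
  have "(\<lambda>s. if 0 \<le> s then Xi \<phi>' s else 0) = (\<lambda>s. if 0 \<le> s then Q s else 0)"
  proof
    fix s
    have "(LINT x:{0<..<s}|lborel. xi \<phi>' x) = (LINT x:{0<..<s}|lborel. xi2 x)"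
      unfolding set_lebesgue_integral_def
      by (intro Bochner_Integration.integral_cong) (auto simp: indicator_def xe)
    then show "(if 0 \<le> s then Xi \<phi>' s else 0) = (if 0 \<le> s then Q s else 0)"
      unfolding Q_def Xi_def interval_lebesgue_integral_def by simp
  qed
  then show ?thesis using Qm by simp
qed



lemma cube_measure:
  fixes r :: real assumes "r > 0"
  shows "emeasure lborel (cbox (-r *\<^sub>R One) (r *\<^sub>R (One::'a::euclidean_space))) = ennreal ((2*r) ^ DIM('a))"
proof -
  have "(\<Prod>b\<in>(Basis::'a set). (r *\<^sub>R One - (-r *\<^sub>R One)) \<bullet> b) = (\<Prod>b\<in>(Basis::'a set). 2*r)"
    by (intro prod.cong) (auto simp: inner_add_left)
  then show ?thesis using assms by (simp add: emeasure_lborel_cbox_eq inner_diff_left)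
qed

lemma in_cube:
  fixes x :: "'a::euclidean_space" assumes "norm x \<le> r"
  shows "x \<in> cbox (-r *\<^sub>R One) (r *\<^sub>R One)"
  using assms Basis_le_norm[of _ x] by (fastforce simp: mem_box abs_le_iff)

lemma p_exists:
  obtains p :: "'a::euclidean_space \<Rightarrow> real" and \<alpha> \<beta> :: real
  where "integrable lebesgue p" "\<And>x. p x > 0" "\<And>x. - ln (p x) \<le> \<alpha> + \<beta> * norm x" "\<beta> \<ge> 0"
proof -
  define D where "D = DIM('a)"
  define a where "a = (\<lambda>j::nat. (1/2::real)^j / (2*(real j+1))^D)"
  define C where "C = (\<lambda>j::nat. cbox (-(real j+1) *\<^sub>R One) ((real j+1) *\<^sub>R (One::'a)))"
  define p where "p = (\<lambda>x. \<Sum>j. a j * indicator (C j) x)"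
  have apos: "a j > 0" for j unfolding a_def by simp
  have ale: "a j \<le> (1/2)^j" for j
  proof -
    have "(2*(real j+1))^D \<ge> 1" by (intro one_le_power) auto
    then show ?thesis unfolding a_def by (simp add: divide_le_eq)
  qed
  have summ: "summable (\<lambda>j. a j * indicator (C j) x)" for x
    by (rule summable_comparison_test[OF _ summable_geometric[of "1/2::real"]])
       (use ale apos in \<open>auto intro!: exI[of _ 0] simp: indicator_def less_imp_le\<close>)
  have pm: "p \<in> borel_measurable lborel" unfolding p_def C_def by measurable
  have lowb: "p x \<ge> a (nat \<lceil>norm x\<rceil>)" for x
  proof -
    define J where "J = nat \<lceil>norm x\<rceil>"
    have "norm x \<le> real J + 1" unfolding J_def by linarith
    then have "x \<in> C J" unfolding C_def by (rule in_cube)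
    have "a J * indicator (C J) x = sum (\<lambda>j. a j * indicator (C j) x) {J}" by (subst sum.insert) simp_all
    also have "\<dots> \<le> p x" unfolding p_def
      by (rule sum_le_suminf[OF summ]) (use apos in \<open>auto intro!: mult_nonneg_nonneg simp: less_imp_le\<close>)
    finally show ?thesis using \<open>x \<in> C J\<close> unfolding J_def by simp
  qed
  have ppos: "p x > 0" for x using lowb[of x] apos[of "nat \<lceil>norm x\<rceil>"] by linarith
  have lnb: "- ln (p x) \<le> (1 + 2*D) + (1 + 2*D) * norm x + 2*D" for x
  proof -
    define J where "J = nat \<lceil>norm x\<rceil>"
    have Jb: "real J \<le> norm x + 1" unfolding J_def by simp
    have "- ln (p x) \<le> - ln (a J)" using lowb[of x] apos[of J] unfolding J_def by simp
    also have "- ln (a J) = real J * ln 2 + real D * ln (2*(real J+1))"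
      unfolding a_def by (simp add: ln_div ln_realpow ln_mult power_divide)
    also have "\<dots> \<le> real J * 1 + real D * (2*(real J+1))"
    proof (intro add_mono mult_left_mono)
      show "ln (2::real) \<le> 1" using ln_le_minus_one[of 2] by linarith
      have "0 < 2*(real J+1)" by simp
      from ln_le_minus_one[OF this] show "ln (2*(real J+1)) \<le> 2*(real J+1)" by linarith
    qed auto
    also have "\<dots> \<le> (1 + 2*D) + (1 + 2*D) * norm x + 2*D"
    proof -
      have "(1+2*real D)*real J \<le> (1+2*real D)*(norm x+1)" using Jb by (intro mult_left_mono) auto
      then show ?thesis by (simp add: algebra_simps)
    qed
    finally show ?thesis by simp
  qed
  have int_term: "(\<integral>\<^sup>+x. ennreal (a j * indicator (C j) x) \<partial>lborel) = ennreal ((1/2)^j)" for j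
  proof -
    have "(\<integral>\<^sup>+x. ennreal (a j * indicator (C j) x) \<partial>lborel) = (\<integral>\<^sup>+x. ennreal (a j) * indicator (C j) x \<partial>lborel)"
      by (intro nn_integral_cong) (auto simp: indicator_def)
    also have "\<dots> = ennreal (a j) * emeasure lborel (C j)"
      by (rule nn_integral_cmult_indicator) (simp add: C_def)
    also have "\<dots> = ennreal (a j) * ennreal ((2*(real j+1))^D)"
      unfolding C_def D_def by (subst cube_measure) auto
    also have "\<dots> = ennreal ((1/2)^j)" unfolding a_def
      by (simp add: ennreal_mult[symmetric])
    finally show ?thesis .
  qed
  have "(\<integral>\<^sup>+x. ennreal (p x) \<partial>lborel) = (\<integral>\<^sup>+x. (\<Sum>j. ennreal (a j * indicator (C j) x)) \<partial>lborel)"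
    unfolding p_def
    by (intro nn_integral_cong suminf_ennreal2[symmetric] summ) (use apos in \<open>auto simp: indicator_def less_imp_le\<close>)
  also have "\<dots> = (\<Sum>j. (\<integral>\<^sup>+x. ennreal (a j * indicator (C j) x) \<partial>lborel))"
    by (rule nn_integral_suminf) (simp add: C_def)
  also have "\<dots> = (\<Sum>j. ennreal ((1/2)^j))" using int_term by simp
  also have "\<dots> = ennreal (\<Sum>j. (1/2::real)^j)"
    by (rule suminf_ennreal2) (auto intro: summable_geometric)
  finally have "(\<integral>\<^sup>+x. ennreal (p x) \<partial>lborel) < \<infinity>" by simp
  then have "integrable lborel p"
    by (intro integrableI_nonneg pm) (use ppos in \<open>auto intro: less_imp_le\<close>)
  then have "integrable lebesgue p" using integrable_completion pm by (metis measurable_lborel1)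
  then show ?thesis
    by (rule that[of p "(1 + 2*D) + 2*D" "1 + 2*D"]) (use ppos lnb in \<open>auto simp: algebra_simps\<close>)
qed



lemma ent_abs_eq: "ent_abs y = ent y + 2 * max 0 (- ent y)"
proof (cases "y > 0")
  case True
  show ?thesis
  proof (cases "ln y \<ge> 0")
    case True
    then have "y * ln y \<ge> 0" using \<open>y > 0\<close> by simp
    then show ?thesis using True \<open>y > 0\<close> unfolding ent_abs_def ent_def by simp
  next
    case False
    then have "y * ln y < 0" using \<open>y > 0\<close> by (simp add: mult_pos_neg)
    then show ?thesis using False \<open>y > 0\<close> unfolding ent_abs_def ent_def by simp
  qed
qed (simp add: ent_abs_def ent_def)

lemma ent_neg:
  fixes y q :: real assumes y: "y \<ge> 0" and q: "q > 0"
  shows "- ent y \<le> 2 * y * max 0 (- ln q) + 2 * q"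
proof (cases "y > 0 \<and> y < 1")
  case False
  then have "- ent y \<le> 0" using y unfolding ent_def by auto
  moreover have "0 \<le> 2 * y * max 0 (- ln q) + 2 * q" using y q by simp
  ultimately show ?thesis by linarith
next
  case True
  then have y0: "y > 0" and y1: "y < 1" by auto
  show ?thesis
  proof (cases "y \<ge> q^2")
    case True
    have "ln y \<ge> ln (q^2)" using True q y0 by simp
    then have "ln y \<ge> 2 * ln q" using q by (simp add: ln_realpow)
    then have "y * (2 * ln q) \<le> y * ln y" using y0 by (intro mult_left_mono) auto
    then have "- (y * ln y) \<le> y * (- 2 * ln q)" by simp
    also have "\<dots> = 2 * y * (- ln q)" by simp
    also have "\<dots> \<le> 2 * y * max 0 (- ln q)" using y0 by (intro mult_left_mono) auto
    finally show ?thesis using y0 q unfolding ent_def by simp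
  next
    case False
    define t where "t = sqrt y"
    have t0: "t > 0" unfolding t_def using y0 by simp
    have "sqrt y < sqrt (q^2)" using False by (intro real_sqrt_less_mono) simp
    then have tq: "t < q" unfolding t_def using q by simp
    have yt: "y = t * t" unfolding t_def using y0 by simp
    have "ln (1/t) \<le> 1/t - 1" using t0 by (intro ln_le_minus_one) simp
    then have "- ln t \<le> 1/t" using t0 by (simp add: ln_div)
    then have "t * (- ln t) \<le> t * (1/t)" using t0 by (intro mult_left_mono) auto
    then have "- (t * ln t) \<le> 1" using t0 by simp
    have "- (y * ln y) = 2 * t * (- (t * ln t))" using t0 unfolding yt by (simp add: ln_mult)
    also have "\<dots> \<le> 2 * t * 1" using \<open>- (t * ln t) \<le> 1\<close> t0 by (intro mult_left_mono) auto
    also have "\<dots> \<le> 2 * q" using tq by simp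
    finally have "- ent y \<le> 2 * q" using y0 unfolding ent_def by simp
    moreover have "0 \<le> 2 * y * max 0 (- ln q)" using y by simp
    ultimately show ?thesis by linarith
  qed
qed

lemma esupp_AE:
  fixes f :: "'a::euclidean_space \<Rightarrow> real"
  assumes "esupp f \<subseteq> \<Omega>"
  shows "AE x in lebesgue. x \<notin> \<Omega> \<longrightarrow> f x = 0"
proof -
  define F where "F = {U. open U \<and> (AE x in lebesgue. x \<in> U \<longrightarrow> f x = 0)}"
  obtain F' where F': "F' \<subseteq> F" "countable F'" "\<Union>F' = \<Union>F"
    using Lindelof[of F] unfolding F_def by blast
  have "AE x in lebesgue. \<forall>U\<in>F'. x \<in> U \<longrightarrow> f x = 0"
    using F' unfolding F_def by (subst AE_ball_countable) auto
  then show ?thesis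
  proof (rule AE_mp, intro AE_I2 impI)
    fix x assume h: "\<forall>U\<in>F'. x \<in> U \<longrightarrow> f x = 0" and "x \<notin> \<Omega>"
    then have "x \<notin> esupp f" using assms by auto
    then have "x \<in> \<Union>F" unfolding esupp_def F_def by auto
    then show "f x = 0" using h F'(3) by auto
  qed
qed



lemma core:
  fixes f V W :: "'a::euclidean_space \<Rightarrow> real" and \<phi>' :: "real \<Rightarrow> real" and p :: "'a \<Rightarrow> real"
    and K \<alpha> \<beta> R c E0 :: real
  assumes f0: "\<And>x. f x \<ge> 0" and fi: "integrable lebesgue f" and f1: "(\<integral>x. f x \<partial>lebesgue) = 1"
    and fm2: "integrable lebesgue (\<lambda>x. (norm x)\<^sup>2 * f x)"
    and Vm: "V \<in> borel_measurable lebesgue" and V0: "\<And>x. V x \<ge> 0"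
    and Vg: "\<And>x. norm x \<ge> R \<Longrightarrow> V x \<ge> c * (norm x)\<^sup>2" and c: "c > 0"
    and W0: "\<And>x. W x \<ge> 0"
    and XiL: "\<And>s. s \<ge> 0 \<Longrightarrow> Xi \<phi>' s \<ge> - K * s" and K: "K \<ge> 0"
    and Xm: "(\<lambda>s. if 0 \<le> s then Xi \<phi>' s else 0) \<in> borel_measurable borel"
    and pi: "integrable lebesgue p" and pp: "\<And>x. p x > 0" and pl: "\<And>x. - ln (p x) \<le> \<alpha> + \<beta> * norm x"
    and \<beta>: "\<beta> \<ge> 0"
    and ei: "integrable lebesgue (energy_density \<phi>' V W f)"
    and eb: "(\<integral>x. energy_density \<phi>' V W f x \<partial>lebesgue) \<le> E0"
  defines "lam \<equiv> \<beta> / c + 1"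
  defines "C0 \<equiv> 2*\<bar>\<alpha>\<bar> + 2*(\<integral>x. p x \<partial>lebesgue) + 2*\<beta>*lam + (\<beta>/(2*lam)) * (R\<^sup>2 + (\<bar>E0\<bar> + K)/c)"
  shows "integrable lebesgue (\<lambda>x. ent_abs (f x) + Xi \<phi>' (f x) + f x * V x + f x * conv W f x) \<and>
    (\<integral>x. ent_abs (f x) + Xi \<phi>' (f x) + f x * V x + f x * conv W f x \<partial>lebesgue)
      - (\<integral>x. energy_density \<phi>' V W f x \<partial>lebesgue) \<le> 6 * C0 + E0 + K"
proof -
  define e where "e = energy_density \<phi>' V W f"
  define En where "En = (\<lambda>x. ent (f x))"
  define X where "X = (\<lambda>x. Xi \<phi>' (f x))"
  define Vf where "Vf = (\<lambda>x. f x * V x)"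
  define A where "A = (\<lambda>x. f x * conv W f x)"
  define L1 where "L1 = (\<lambda>x. 2 * f x * (\<bar>\<alpha>\<bar> + \<beta> * norm x) + 2 * p x)"
  define n where "n = (\<lambda>x. max 0 (- En x))"
  have e_eq: "e x = En x + X x + Vf x + 1/2 * A x" for x
    unfolding e_def energy_density_def En_def X_def Vf_def A_def by simp
  have fm: "f \<in> borel_measurable lebesgue" using fi by auto
  have em: "e \<in> borel_measurable lebesgue" using ei unfolding e_def by auto
  have idm: "(\<lambda>x::'a. x) \<in> borel_measurable lebesgue" by (rule measurable_completion) simp
  have nm: "(\<lambda>x::'a. norm x) \<in> borel_measurable lebesgue" by (rule measurable_completion) simp
  have pm: "p \<in> borel_measurable lebesgue" using pi by auto
  have Enm: "En \<in> borel_measurable lebesgue" unfolding En_def ent_def using fm by measurable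
  have Xm': "X \<in> borel_measurable lebesgue"
  proof -
    have "X = (\<lambda>x. (\<lambda>s. if 0 \<le> s then Xi \<phi>' s else 0) (f x))" unfolding X_def using f0 by auto
    then show ?thesis using measurable_compose[OF fm Xm] by simp
  qed
  have Vfm: "Vf \<in> borel_measurable lebesgue" unfolding Vf_def using fm Vm by measurable
  have Am: "A \<in> borel_measurable lebesgue"
  proof -
    have "A = (\<lambda>x. 2 * (e x - En x - X x - Vf x))" using e_eq by (auto simp: algebra_simps)
    then show ?thesis using em Enm Xm' Vfm by simp
  qed
  have nfi: "integrable lebesgue (\<lambda>x. f x * norm x)"
  proof (rule Bochner_Integration.integrable_bound[where f="\<lambda>x. f x + (norm x)\<^sup>2 * f x"])
    show "integrable lebesgue (\<lambda>x. f x + (norm x)\<^sup>2 * f x)" using fi fm2 by auto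
    show "(\<lambda>x. f x * norm x) \<in> borel_measurable lebesgue" using fm nm by measurable
    show "AE x in lebesgue. norm (f x * norm x) \<le> norm (f x + (norm x)\<^sup>2 * f x)"
    proof (intro AE_I2)
      fix x :: 'a
      have "0 \<le> (norm x - 1)\<^sup>2" by simp
      then have "2 * norm x \<le> 1 + (norm x)\<^sup>2" by (simp add: power2_eq_square algebra_simps)
      then have "norm x \<le> 1 + (norm x)\<^sup>2" using norm_ge_zero[of x] by linarith
      then have "f x * norm x \<le> f x * (1 + (norm x)\<^sup>2)" using f0[of x] by (intro mult_left_mono) auto
      then show "norm (f x * norm x) \<le> norm (f x + (norm x)\<^sup>2 * f x)"
        using f0[of x] by (simp add: algebra_simps)
    qed
  qed
  have L1e: "L1 = (\<lambda>x. (2*\<bar>\<alpha>\<bar>) * f x + (2*\<beta>) * (f x * norm x) + 2 * p x)"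
    unfolding L1_def by (auto simp: algebra_simps)
  have L1i: "integrable lebesgue L1" unfolding L1e
    by (intro Bochner_Integration.integrable_add integrable_mult_right fi nfi pi)
  have L1int: "(\<integral>x. L1 x \<partial>lebesgue) = 2*\<bar>\<alpha>\<bar> + 2*\<beta> * (\<integral>x. f x * norm x \<partial>lebesgue) + 2 * (\<integral>x. p x \<partial>lebesgue)"
    unfolding L1e using fi nfi pi f1 by simp
  have nL: "- En x \<le> L1 x" for x
  proof -
    have "- En x \<le> 2 * f x * max 0 (- ln (p x)) + 2 * p x" unfolding En_def by (rule ent_neg[OF f0 pp])
    also have "\<dots> \<le> L1 x" unfolding L1_def
    proof -
      have "max 0 (- ln (p x)) \<le> \<bar>\<alpha>\<bar> + \<beta> * norm x" using pl[of x] \<beta> by (simp add: mult_nonneg_nonneg)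
      then have "2 * f x * max 0 (- ln (p x)) \<le> 2 * f x * (\<bar>\<alpha>\<bar> + \<beta> * norm x)" using f0[of x] by (intro mult_left_mono) auto
      then show "2 * f x * max 0 (- ln (p x)) + 2 * p x \<le> 2 * f x * (\<bar>\<alpha>\<bar> + \<beta> * norm x) + 2 * p x" by simp
    qed
    finally show ?thesis .
  qed
  have L10: "L1 x \<ge> 0" for x unfolding L1_def using f0[of x] pp[of x] \<beta> by (intro add_nonneg_nonneg mult_nonneg_nonneg) (auto intro: less_imp_le)
  have XL: "X x \<ge> - K * f x" for x unfolding X_def using XiL f0 by auto
  have V0': "Vf x \<ge> 0" for x unfolding Vf_def using f0 V0 by simp
  have A0: "A x \<ge> 0" for x unfolding A_def conv_def using f0 W0
    by (intro mult_nonneg_nonneg integral_nonneg_AE AE_I2) auto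
  define Tt where "Tt = (\<lambda>x. e x + L1 x + K * f x)"
  have Tti: "integrable lebesgue Tt" unfolding Tt_def using ei L1i fi unfolding e_def by auto
  have bnd: "integrable lebesgue g" if "g \<in> borel_measurable lebesgue" "\<And>x. 0 \<le> g x" "\<And>x. g x \<le> Tt x" for g
    by (rule Bochner_Integration.integrable_bound[OF Tti that(1)]) (use that in \<open>auto intro!: AE_I2 simp: abs_of_nonneg intro: order_trans[OF that(3) abs_ge_self]\<close>)
  have sumT: "Tt x = (En x + L1 x) + (X x + K * f x) + Vf x + 1/2 * A x" for x unfolding Tt_def e_eq by simp
  have facts: "- En x \<le> L1 x" "- (K * f x) \<le> X x" "0 \<le> Vf x" "0 \<le> A x"
      "Tt x = (En x + L1 x) + (X x + K * f x) + Vf x + 1/2 * A x" for x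
    using nL XL V0' A0 sumT by auto
  have i1: "integrable lebesgue (\<lambda>x. En x + L1 x)"
  proof (rule bnd)
    show "(\<lambda>x. En x + L1 x) \<in> borel_measurable lebesgue" using Enm L1i by auto
    fix x show "0 \<le> En x + L1 x" using facts[of x] by linarith
    show "En x + L1 x \<le> Tt x" using facts[of x] by linarith
  qed
  have i2: "integrable lebesgue (\<lambda>x. X x + K * f x)"
  proof (rule bnd)
    show "(\<lambda>x. X x + K * f x) \<in> borel_measurable lebesgue" using Xm' fm by auto
    fix x show "0 \<le> X x + K * f x" using facts[of x] by linarith
    show "X x + K * f x \<le> Tt x" using facts[of x] by linarith
  qed
  have i3: "integrable lebesgue Vf"
  proof (rule bnd)
    show "Vf \<in> borel_measurable lebesgue" using Vfm by auto
    fix x show "0 \<le> Vf x" using facts[of x] by linarith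
    show "Vf x \<le> Tt x" using facts[of x] by linarith
  qed
  have i4': "integrable lebesgue (\<lambda>x. 1/2 * A x)"
  proof (rule bnd)
    show "(\<lambda>x. 1/2 * A x) \<in> borel_measurable lebesgue" using Am by auto
    fix x show "0 \<le> 1/2 * A x" using facts[of x] by linarith
    show "1/2 * A x \<le> Tt x" using facts[of x] by linarith
  qed
  have iEn: "integrable lebesgue En"
  proof -
    have "integrable lebesgue (\<lambda>x. (En x + L1 x) - L1 x)" by (rule Bochner_Integration.integrable_diff[OF i1 L1i])
    then show ?thesis by simp
  qed
  have iX: "integrable lebesgue X"
  proof -
    have "integrable lebesgue (\<lambda>x. (X x + K * f x) - K * f x)" by (rule Bochner_Integration.integrable_diff[OF i2 integrable_mult_right[OF fi]])
    then show ?thesis by simp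
  qed
  have iA: "integrable lebesgue A"
  proof -
    have "integrable lebesgue (\<lambda>x. 2 * (1/2 * A x))" by (rule integrable_mult_right[OF i4'])
    then show ?thesis by simp
  qed
  have n0: "n x \<ge> 0" for x unfolding n_def by simp
  have nL1: "n x \<le> L1 x" for x unfolding n_def using nL[of x] L10[of x] by simp
  have ni: "integrable lebesgue n"
    by (rule Bochner_Integration.integrable_bound[OF L1i])
       (use Enm n0 nL1 in \<open>auto simp: n_def intro!: AE_I2\<close>)
  define IE where "IE = (\<integral>x. e x \<partial>lebesgue)"
  define IEn where "IEn = (\<integral>x. En x \<partial>lebesgue)"
  define IX where "IX = (\<integral>x. X x \<partial>lebesgue)"
  define IV where "IV = (\<integral>x. Vf x \<partial>lebesgue)"
  define IA where "IA = (\<integral>x. A x \<partial>lebesgue)"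
  define N where "N = (\<integral>x. n x \<partial>lebesgue)"
  define P where "P = (\<integral>x. p x \<partial>lebesgue)"
  define M1 where "M1 = (\<integral>x. f x * norm x \<partial>lebesgue)"
  define M2 where "M2 = (\<integral>x. (norm x)\<^sup>2 * f x \<partial>lebesgue)"
  have ia: "IE = IEn + IX + IV + 1/2 * IA"
  proof -
    have "e = (\<lambda>x. En x + X x + Vf x + 1/2 * A x)" by (intro ext e_eq)
    then have "IE = (\<integral>x. En x + X x + Vf x + 1/2 * A x \<partial>lebesgue)" unfolding IE_def by simp
    also have "\<dots> = IEn + IX + IV + 1/2 * IA" unfolding IEn_def IX_def IV_def IA_def
      using iEn iX i3 iA by (simp add: Bochner_Integration.integral_add)
    finally show ?thesis .
  qed
  have ib: "IEn \<ge> - N"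
  proof -
    have "(\<integral>x. - n x \<partial>lebesgue) \<le> IEn" unfolding IEn_def
      by (rule integral_mono) (use ni iEn in \<open>auto simp: n_def\<close>)
    then show ?thesis unfolding N_def by simp
  qed
  have ic: "IX \<ge> - K"
  proof -
    have "(\<integral>x. - K * f x \<partial>lebesgue) \<le> IX" unfolding IX_def
      by (rule integral_mono) (use fi iX XL in \<open>auto\<close>)
    then show ?thesis using f1 by simp
  qed
  have id1: "IV \<ge> 0" unfolding IV_def by (intro integral_nonneg_AE AE_I2 V0')
  have id2: "IA \<ge> 0" unfolding IA_def by (intro integral_nonneg_AE AE_I2 A0)
  have N0: "N \<ge> 0" unfolding N_def by (intro integral_nonneg_AE AE_I2 n0)
  have IEb: "IE \<le> E0" using eb unfolding IE_def e_def .
  have ie: "IV \<le> \<bar>E0\<bar> + N + K" using ia ib ic id2 IEb by linarith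
  have if_: "M2 \<le> R\<^sup>2 + IV / c"
  proof -
    have "M2 \<le> (\<integral>x. R\<^sup>2 * f x + Vf x / c \<partial>lebesgue)" unfolding M2_def
    proof (rule integral_mono)
      show "integrable lebesgue (\<lambda>x. (norm x)\<^sup>2 * f x)" by (rule fm2)
      show "integrable lebesgue (\<lambda>x. R\<^sup>2 * f x + Vf x / c)" using fi i3 by auto
      fix x :: 'a
      show "(norm x)\<^sup>2 * f x \<le> R\<^sup>2 * f x + Vf x / c"
      proof (cases "norm x \<ge> R")
        case True
        then have "c * (norm x)\<^sup>2 \<le> V x" by (rule Vg)
        then have "(norm x)\<^sup>2 \<le> V x / c" using c by (simp add: field_simps)
        then have "(norm x)\<^sup>2 * f x \<le> V x / c * f x" using f0[of x] by (intro mult_right_mono) auto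
        moreover have "R\<^sup>2 * f x \<ge> 0" using f0[of x] by simp
        ultimately show ?thesis unfolding Vf_def by (simp add: field_simps)
      next
        case False
        then have "(norm x)\<^sup>2 \<le> R\<^sup>2" using norm_ge_zero[of x] by (intro power_mono) auto
        then have "(norm x)\<^sup>2 * f x \<le> R\<^sup>2 * f x" using f0[of x] by (intro mult_right_mono) auto
        moreover have "Vf x / c \<ge> 0" using V0'[of x] c by simp
        ultimately show ?thesis by linarith
      qed
    qed
    also have "\<dots> = R\<^sup>2 + IV / c" unfolding IV_def using fi i3 f1 by simp
    finally show ?thesis .
  qed
  have lam: "lam > 0" unfolding lam_def using \<beta> c by (simp add: add_nonneg_pos)
  have ig: "M1 \<le> lam + M2 / (4 * lam)"
  proof -
    have "M1 \<le> (\<integral>x. lam * f x + (norm x)\<^sup>2 * f x / (4 * lam) \<partial>lebesgue)" unfolding M1_def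
    proof (rule integral_mono)
      show "integrable lebesgue (\<lambda>x. f x * norm x)" by (rule nfi)
      show "integrable lebesgue (\<lambda>x. lam * f x + (norm x)\<^sup>2 * f x / (4 * lam))" using fi fm2 by auto
      fix x :: 'a
      have "0 \<le> (norm x - 2 * lam)\<^sup>2" by simp
      then have "4 * lam * norm x \<le> (norm x)\<^sup>2 + 4 * lam * lam" by (simp add: power2_eq_square algebra_simps)
      then have "norm x \<le> lam + (norm x)\<^sup>2 / (4 * lam)" using lam by (simp add: field_simps)
      then have "f x * norm x \<le> f x * (lam + (norm x)\<^sup>2 / (4 * lam))" using f0[of x] by (intro mult_left_mono) auto
      then show "f x * norm x \<le> lam * f x + (norm x)\<^sup>2 * f x / (4 * lam)" by (simp add: algebra_simps)
    qed
    also have "\<dots> = lam + M2 / (4 * lam)" unfolding M2_def using fi fm2 f1 by simp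
    finally show ?thesis .
  qed
  have ih: "N \<le> 2*\<bar>\<alpha>\<bar> + 2*\<beta> * M1 + 2 * P"
  proof -
    have "N \<le> (\<integral>x. L1 x \<partial>lebesgue)" unfolding N_def by (rule integral_mono[OF ni L1i nL1])
    then show ?thesis using L1int unfolding M1_def P_def by simp
  qed
  define \<theta> where "\<theta> = \<beta> / (2 * lam)"
  have th0: "\<theta> \<ge> 0" unfolding \<theta>_def using \<beta> lam by simp
  have thc: "\<theta> / c \<le> 1/2"
  proof -
    have "lam * c = \<beta> + c" unfolding lam_def using c by (simp add: field_simps)
    then have "\<theta> / c = \<beta> / (2 * (\<beta> + c))" unfolding \<theta>_def using c lam by (simp add: field_simps)
    also have "\<dots> \<le> 1/2" using \<beta> c by (simp add: field_simps)
    finally show ?thesis .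
  qed
  have "N \<le> 2*\<bar>\<alpha>\<bar> + 2 * P + 2*\<beta>*lam + \<theta> * M2"
  proof -
    have "2*\<beta> * M1 \<le> 2*\<beta> * (lam + M2 / (4 * lam))" using ig \<beta> by (intro mult_left_mono) auto
    also have "\<dots> = 2*\<beta>*lam + \<theta> * M2" unfolding \<theta>_def using lam by (simp add: field_simps)
    finally show ?thesis using ih by linarith
  qed
  also have "\<theta> * M2 \<le> \<theta> * (R\<^sup>2 + (\<bar>E0\<bar> + K)/c) + (\<theta> / c) * N"
  proof -
    have "\<theta> * M2 \<le> \<theta> * (R\<^sup>2 + (\<bar>E0\<bar> + N + K) / c)"
    proof (rule mult_left_mono[OF _ th0])
      have "IV / c \<le> (\<bar>E0\<bar> + N + K) / c" using ie c by (simp add: divide_right_mono)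
      then show "M2 \<le> R\<^sup>2 + (\<bar>E0\<bar> + N + K) / c" using if_ by linarith
    qed
    also have "\<dots> = \<theta> * (R\<^sup>2 + (\<bar>E0\<bar> + K)/c) + (\<theta> / c) * N" using c by (simp add: field_simps)
    finally show ?thesis .
  qed
  also have "(\<theta> / c) * N \<le> 1/2 * N" using thc N0 by (intro mult_right_mono) auto
  finally have "N \<le> 2*\<bar>\<alpha>\<bar> + 2 * P + 2*\<beta>*lam + \<theta> * (R\<^sup>2 + (\<bar>E0\<bar> + K)/c) + 1/2 * N" by linarith
  moreover define Z where "Z = 2*\<bar>\<alpha>\<bar> + 2 * P + 2*\<beta>*lam + \<theta> * (R\<^sup>2 + (\<bar>E0\<bar> + K)/c)"
  ultimately have "N \<le> Z + 1/2 * N" by simp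
  then have "N \<le> 2 * Z" by linarith
  then have NC: "N \<le> 2 * C0" unfolding C0_def \<theta>_def P_def Z_def .
  have g_eq: "ent_abs (f x) + Xi \<phi>' (f x) + f x * V x + f x * conv W f x = En x + 2 * n x + X x + Vf x + A x" for x
    unfolding En_def n_def X_def Vf_def A_def by (simp add: ent_abs_eq)
  have gi: "integrable lebesgue (\<lambda>x. En x + 2 * n x + X x + Vf x + A x)"
    using iEn ni iX i3 iA by auto
  have gint: "(\<integral>x. En x + 2 * n x + X x + Vf x + A x \<partial>lebesgue) = IEn + 2 * N + IX + IV + IA"
    unfolding IEn_def N_def IX_def IV_def IA_def using iEn ni iX i3 iA
    by (simp add: Bochner_Integration.integral_add)
  have "IEn + 2 * N + IX + IV + IA - IE \<le> 6 * C0 + E0 + K"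
    using ia ib ic id1 IEb NC by linarith
  then show ?thesis using gi gint unfolding g_eq IE_def e_def by simp
qed

theorem mainTheorem13:
  fixes \<Omega> :: "'a::euclidean_space set"
    and T :: real
    and u0 :: "'a \<Rightarrow> real"
    and W :: "'a \<Rightarrow> real" and gW :: "'a \<Rightarrow> 'a"
    and \<phi> \<phi>' :: "real \<Rightarrow> real" and \<mu> a b :: real
    and V0 :: "'a \<Rightarrow> real"
    and V :: "nat \<Rightarrow> 'a \<Rightarrow> real" and gV :: "nat \<Rightarrow> 'a \<Rightarrow> 'a"
    and c R :: real
    and u :: "nat \<Rightarrow> real \<Rightarrow> 'a \<Rightarrow> real" and G :: "nat \<Rightarrow> real \<Rightarrow> 'a \<Rightarrow> 'a"
  assumes dom: "C2_domain \<Omega>"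
    and T_pos: "T > 0"
    \<comment> \<open>Assumption B (i)\<close>
    and u0_nonneg: "\<forall>x. u0 x \<ge> 0"
    and u0_int: "integrable lebesgue u0" "(\<integral>x. u0 x \<partial>lebesgue) = 1"
    and u0_supp: "esupp u0 \<subseteq> \<Omega>"
    and u0_energy: "integrable lebesgue (energy_density \<phi>' (V 1) W u0)"
    \<comment> \<open>Assumption B (ii)\<close>
    and W_reg: "W1inf_loc_with W gW"
    and W_sym: "\<forall>x. W (- x) = W x"
    and W_nonneg: "\<forall>x. W x \<ge> 0"
    \<comment> \<open>Assumption B (iv)\<close>
    and phi_C1: "continuous_on {0..} \<phi>'"
    and phi_deriv: "\<forall>s\<ge>0. (\<phi> has_real_derivative \<phi>' s) (at s within {0..})"
    and phi_mono: "mono_on {0..} \<phi>"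
    and phi_0: "\<phi> 0 = 0"
    and mu_pos: "\<mu> > 0" and a_pos: "a > 0" and ab: "b \<ge> a"
    and sigma_bounds: "\<forall>s\<ge>0. \<mu> * s powr a \<le> \<phi>' s - 1 \<and> \<phi>' s - 1 \<le> s powr b / \<mu>"
    \<comment> \<open>V_0\<close>
    and V0_reg: "W1inf_on \<Omega> V0"
    and V0_nonneg: "\<forall>x\<in>\<Omega>. V0 x \<ge> 0"
    \<comment> \<open>confining potentials V_k (Assumption B (iii) uniformly in k)\<close>
    and Vk_reg: "\<forall>k\<ge>1. W1inf_loc_with (V k) (gV k)"
    and Vk_nonneg: "\<forall>k\<ge>1. \<forall>x. V k x \<ge> 0"
    and Vk_Omega: "\<forall>k\<ge>1. \<forall>x\<in>\<Omega>. V k x = V0 x"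
    and Vk_far: "\<forall>k\<ge>1. \<forall>x. infdist x \<Omega> > 1 / real k \<longrightarrow> V k x \<ge> real k"
    and c_pos: "c > 0"
    and Vk_growth: "\<forall>k\<ge>1. \<forall>x. norm x \<ge> R \<longrightarrow> V k x \<ge> c * (norm x)\<^sup>2"
    \<comment> \<open>u_k free energy solution of (E_{V_k})\<close>
    and sol: "\<forall>k\<ge>1. free_energy_solution \<phi> \<phi>' W gW (V k) (gV k) u0 T (u k) (G k)"
  shows "\<exists>C. \<forall>k\<ge>1. \<forall>T'\<in>{0..T}.
     integrable lebesgue (\<lambda>x. ent_abs (u k T' x) + Xi \<phi>' (u k T' x) + u k T' x * V k x
                              + u k T' x * conv W (u k T') x) \<and>
     (\<integral>\<^sup>+z. indicator ({0..T'} \<times> UNIV) z * ennreal (dissip (u k) (G k) (gV k) gW z) \<partial>lebesgue) < \<infinity> \<and>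
     (\<integral>x. ent_abs (u k T' x) + Xi \<phi>' (u k T' x) + u k T' x * V k x
                              + u k T' x * conv W (u k T') x \<partial>lebesgue)
     + enn2real (\<integral>\<^sup>+z. indicator ({0..T'} \<times> UNIV) z * ennreal (dissip (u k) (G k) (gV k) gW z) \<partial>lebesgue)
     \<le> C"
  proof -
  define K where "K = 1 / (\<mu> * b)"
  have b0: "b > 0" using a_pos ab by linarith
  have K0: "K \<ge> 0" unfolding K_def using mu_pos b0 by simp
  have XiL: "\<And>s. s \<ge> 0 \<Longrightarrow> Xi \<phi>' s \<ge> - K * s"
    unfolding K_def using Xi_lb[OF phi_C1 sigma_bounds mu_pos b0] by simp
  have Xm: "(\<lambda>s. if 0 \<le> s then Xi \<phi>' s else 0) \<in> borel_measurable borel" by (rule Xi_meas[OF phi_C1])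
  obtain p :: "'a \<Rightarrow> real" and \<alpha> \<beta> where pi: "integrable lebesgue p" and pp: "\<And>x. p x > 0"
    and pl: "\<And>x. - ln (p x) \<le> \<alpha> + \<beta> * norm x" and \<beta>: "\<beta> \<ge> 0"
    using p_exists[where 'a='a] by blast
  define E0 where "E0 = energy \<phi>' (V 1) W u0"
  define lam where "lam = \<beta> / c + 1"
  define C0 where "C0 = 2*\<bar>\<alpha>\<bar> + 2*(\<integral>x. p x \<partial>lebesgue) + 2*\<beta>*lam + (\<beta>/(2*lam)) * (R\<^sup>2 + (\<bar>E0\<bar> + K)/c)"
  have u0AE: "AE x in lebesgue. x \<notin> \<Omega> \<longrightarrow> u0 x = 0" by (rule esupp_AE[OF u0_supp])
  show ?thesis
  proof (intro exI[of _ "6 * C0 + 2 * E0 + K"] allI impI ballI)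
    fix k :: nat and T' assume k: "k \<ge> 1" and T': "T' \<in> {0..T}"
    have S: "free_energy_solution \<phi> \<phi>' W gW (V k) (gV k) u0 T (u k) (G k)" using sol k by auto
    define f where "f = u k T'"
    define D where "D = (\<integral>\<^sup>+z. indicator ({0..T'} \<times> UNIV) z * ennreal (dissip (u k) (G k) (gV k) gW z) \<partial>lebesgue)"
    have P2: "P2_dens f" using S T' unfolding free_energy_solution_def f_def by auto
    have ek: "integrable lebesgue (energy_density \<phi>' (V k) W u0)" using S unfolding free_energy_solution_def by auto
    have ei: "integrable lebesgue (energy_density \<phi>' (V k) W f)" and Dfin: "D < \<infinity>"
      and eid: "energy \<phi>' (V k) W f + enn2real D = energy \<phi>' (V k) W u0"
      using S T' unfolding free_energy_solution_def f_def D_def by auto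
    have E0k: "energy \<phi>' (V k) W u0 = E0" unfolding E0_def energy_def
    proof (rule integral_cong_AE)
      show "energy_density \<phi>' (V k) W u0 \<in> borel_measurable lebesgue" using ek by auto
      show "energy_density \<phi>' (V 1) W u0 \<in> borel_measurable lebesgue" using u0_energy by auto
      show "AE x in lebesgue. energy_density \<phi>' (V k) W u0 x = energy_density \<phi>' (V 1) W u0 x"
      proof (rule AE_mp[OF u0AE], intro AE_I2 impI)
        fix x assume h: "x \<notin> \<Omega> \<longrightarrow> u0 x = 0"
        have "u0 x * V k x = u0 x * V 1 x"
        proof (cases "x \<in> \<Omega>")
          case True then show ?thesis using Vk_Omega k by auto
        next
          case False then show ?thesis using h by simp
        qed
        then show "energy_density \<phi>' (V k) W u0 x = energy_density \<phi>' (V 1) W u0 x"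
          unfolding energy_density_def by simp
      qed
    qed
    have eb: "(\<integral>x. energy_density \<phi>' (V k) W f x \<partial>lebesgue) \<le> E0"
      using eid E0k unfolding energy_def by (smt (verit) enn2real_nonneg)
    have Vm: "V k \<in> borel_measurable lebesgue"
      using Vk_reg k unfolding W1inf_loc_with_def Linf_loc_def set_borel_measurable_def by auto
    have cr: "integrable lebesgue (\<lambda>x. ent_abs (f x) + Xi \<phi>' (f x) + f x * V k x + f x * conv W f x) \<and>
      (\<integral>x. ent_abs (f x) + Xi \<phi>' (f x) + f x * V k x + f x * conv W f x \<partial>lebesgue)
        - (\<integral>x. energy_density \<phi>' (V k) W f x \<partial>lebesgue) \<le> 6 * C0 + E0 + K"
      unfolding C0_def lam_def
    proof (rule core[where R=R and c=c])
      show "\<And>x. f x \<ge> 0" using P2 unfolding P2_dens_def by auto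
      show "integrable lebesgue f" "(\<integral>x. f x \<partial>lebesgue) = 1" "integrable lebesgue (\<lambda>x. (norm x)\<^sup>2 * f x)"
        using P2 unfolding P2_dens_def by auto
      show "\<And>x. V k x \<ge> 0" using Vk_nonneg k by auto
      show "\<And>x. norm x \<ge> R \<Longrightarrow> V k x \<ge> c * (norm x)\<^sup>2" using Vk_growth k by auto
    qed (use Vm c_pos W_nonneg XiL K0 Xm pi pp pl \<beta> ei eb in auto)
    have "enn2real D = E0 - (\<integral>x. energy_density \<phi>' (V k) W f x \<partial>lebesgue)"
      using eid E0k unfolding energy_def by simp
    then show "integrable lebesgue (\<lambda>x. ent_abs (u k T' x) + Xi \<phi>' (u k T' x) + u k T' x * V k x
                              + u k T' x * conv W (u k T') x) \<and>
     (\<integral>\<^sup>+z. indicator ({0..T'} \<times> UNIV) z * ennreal (dissip (u k) (G k) (gV k) gW z) \<partial>lebesgue) < \<infinity> \<and>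
     (\<integral>x. ent_abs (u k T' x) + Xi \<phi>' (u k T' x) + u k T' x * V k x
                              + u k T' x * conv W (u k T') x \<partial>lebesgue)
     + enn2real (\<integral>\<^sup>+z. indicator ({0..T'} \<times> UNIV) z * ennreal (dissip (u k) (G k) (gV k) gW z) \<partial>lebesgue)
     \<le> 6 * C0 + 2 * E0 + K"
      using cr Dfin unfolding f_def D_def by linarith
  qed
qed

end
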